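(* Let $\vec{D}_n$ be the oriented diameter of the directed arrowhead $\vec{\mathcal{AT}}_n$. Then $\vec{D}_0=0$ and $\vec{D}_n=2\vec{D}_{n-1}+1$ for all $n>0$.
   Context: For $n\in\mathbb{N}$ let $G_n=\mathbb{Z}_{2^n}\times\mathbb{Z}_{2^n}$ (additive group). Let $S^+=\{(-1,-1),(1,0),(0,1)\}$. The directed arrowhead $\vec{\mathcal{AT}}_n$ is the Cayley digraph $\Gamma(G_n,S^+)$: vertex set $G_n$, with an arc $u\to u+s$ for each $u\in G_n$ and $s\in S^+$ (arithmetic modulo $2^n$). The oriented diameter is the maximum, over ordered pairs $(u,v)$ of vertices, of the length of a shortest directed path from $u$ to $v$. *)

theory Defs
  imports Main
begin

text \<open>Vertices of G_n = Z_{2^n} x Z_{2^n}, represented by canonical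
representatives in {0..<2^n} x {0..<2^n}.\<close>
definition at_vertices :: "nat \<Rightarrow> (int \<times> int) set" where
  "at_vertices n = {0..<2^n} \<times> {0..<2^n}"

definition at_gens :: "(int \<times> int) set" where
  "at_gens = {(-1,-1), (1,0), (0,1)}"

definition at_arcs :: "nat \<Rightarrow> ((int \<times> int) \<times> (int \<times> int)) set" where
  "at_arcs n = {(u, v). u \<in> at_vertices n \<and>
     (\<exists>s\<in>at_gens. v = ((fst u + fst s) mod 2^n, (snd u + snd s) mod 2^n))}"

definition at_dist :: "nat \<Rightarrow> int \<times> int \<Rightarrow> int \<times> int \<Rightarrow> nat" where
  "at_dist n u v = (LEAST k. (u, v) \<in> (at_arcs n) ^^ k)"

definition at_odiam :: "nat \<Rightarrow> nat" where
  "at_odiam n = Max {at_dist n u v | u v. u \<in> at_vertices n \<and> v \<in> at_vertices n}"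

end

theory Submission imports Defs begin

lemma vert_mod: "((a::int) mod 2^n, (b::int) mod 2^n) \<in> at_vertices n"
  by (simp add: at_vertices_def)

lemma reach:
  assumes u: "u \<in> at_vertices n"
  shows "(u,v) \<in> at_arcs n ^^ k \<longleftrightarrow> (\<exists>a b c::nat. a+b+c = k \<and>
     fst v = (fst u + int a - int c) mod 2^n \<and> snd v = (snd u + int b - int c) mod 2^n)"
proof (induction k arbitrary: v)
  case 0
  have "fst u mod 2^n = fst u" "snd u mod 2^n = snd u" using u
    by (auto simp: at_vertices_def)
  then show ?case by (cases u; cases v) auto
next
  case (Suc k)
  show ?case
  proof
    assume "(u,v) \<in> at_arcs n ^^ Suc k"
    then obtain w where w: "(u,w) \<in> at_arcs n ^^ k" "(w,v) \<in> at_arcs n" by auto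
    from w(1) Suc.IH obtain a b c :: nat where abc: "a+b+c = k"
      "fst w = (fst u + int a - int c) mod 2^n" "snd w = (snd u + int b - int c) mod 2^n" by blast
    from w(2) obtain s where s: "s \<in> at_gens" "v = ((fst w + fst s) mod 2^n, (snd w + snd s) mod 2^n)"
      unfolding at_arcs_def by auto
    from s(1) consider "s = (-1,-1)" | "s = (1,0)" | "s = (0,1)" unfolding at_gens_def by auto
    then show "\<exists>a b c::nat. a+b+c = Suc k \<and>
     fst v = (fst u + int a - int c) mod 2^n \<and> snd v = (snd u + int b - int c) mod 2^n"
    proof cases
      case 1
      show ?thesis
        apply (rule exI[of _ a], rule exI[of _ b], rule exI[of _ "Suc c"])
        using abc s(2) 1 by (simp add: mod_add_left_eq mod_add_right_eq mod_diff_left_eq algebra_simps)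
    next
      case 2
      show ?thesis
        apply (rule exI[of _ "Suc a"], rule exI[of _ b], rule exI[of _ c])
        using abc s(2) 2 by (simp add: mod_add_left_eq mod_add_right_eq mod_diff_left_eq algebra_simps)
    next
      case 3
      show ?thesis
        apply (rule exI[of _ a], rule exI[of _ "Suc b"], rule exI[of _ c])
        using abc s(2) 3 by (simp add: mod_add_left_eq mod_add_right_eq mod_diff_left_eq algebra_simps)
    qed
  next
    assume "\<exists>a b c::nat. a+b+c = Suc k \<and>
     fst v = (fst u + int a - int c) mod 2^n \<and> snd v = (snd u + int b - int c) mod 2^n"
    then obtain a b c :: nat where abc: "a+b+c = Suc k"
     "fst v = (fst u + int a - int c) mod 2^n" "snd v = (snd u + int b - int c) mod 2^n" by blast
    show "(u,v) \<in> at_arcs n ^^ Suc k"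
    proof (cases "a > 0")
      case True
      define w where "w = ((fst u + int (a - 1) - int c) mod 2^n, (snd u + int b - int c) mod 2^n)"
      have "(u,w) \<in> at_arcs n ^^ k" 
        apply (simp only: Suc.IH)
        apply (rule exI[of _ "a-1"], rule exI[of _ b], rule exI[of _ c])
        using True abc(1) by (simp add: w_def)
      moreover have "(w,v) \<in> at_arcs n"
        unfolding at_arcs_def at_gens_def using True abc
        by (auto simp: w_def vert_mod mod_add_left_eq mod_add_right_eq mod_diff_left_eq algebra_simps of_nat_diff intro!: prod_eqI)
      ultimately show ?thesis by auto
    next
      case False
      show ?thesis
      proof (cases "b > 0")
        case True
        define w where "w = ((fst u + int a - int c) mod 2^n, (snd u + int (b-1) - int c) mod 2^n)"
        have "(u,w) \<in> at_arcs n ^^ k"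
          apply (simp only: Suc.IH)
          apply (rule exI[of _ "a"], rule exI[of _ "b-1"], rule exI[of _ c])
          using True abc(1) by (simp add: w_def)
        moreover have "(w,v) \<in> at_arcs n"
          unfolding at_arcs_def at_gens_def using True abc
          by (auto simp: w_def vert_mod mod_add_left_eq mod_add_right_eq mod_diff_left_eq algebra_simps of_nat_diff intro!: prod_eqI)
        ultimately show ?thesis by auto
      next
        case F2: False
        with False abc(1) have cpos: "c > 0" by auto
        define w where "w = ((fst u + int a - int (c-1)) mod 2^n, (snd u + int b - int (c-1)) mod 2^n)"
        have "(u,w) \<in> at_arcs n ^^ k"
          apply (simp only: Suc.IH)
          apply (rule exI[of _ "a"], rule exI[of _ "b"], rule exI[of _ "c-1"])
          using cpos abc(1) by (simp add: w_def)
        moreover have "(w,v) \<in> at_arcs n"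
          unfolding at_arcs_def at_gens_def using cpos abc
          by (auto simp: w_def vert_mod mod_add_left_eq mod_add_right_eq mod_diff_left_eq algebra_simps of_nat_diff intro!: prod_eqI)
        ultimately show ?thesis by auto
      qed
    qed
  qed
qed

lemma my_modq: "0 \<le> z - q*N \<Longrightarrow> z - q*N < N \<Longrightarrow> z mod N = z - q*(N::int)"
  by (smt (verit, ccfv_threshold) mod_mult_self1 zmod_trivial_iff)

lemma my_mod0: "0 \<le> z \<Longrightarrow> z < N \<Longrightarrow> z mod N = (z::int)"
  using my_modq[of z 0 N] by simp
lemma my_mod1: "0 \<le> z - N \<Longrightarrow> z - N < N \<Longrightarrow> z mod N = z - (N::int)"
  using my_modq[of z 1 N] by simp
lemma my_mod2: "0 \<le> z - 2*N \<Longrightarrow> z - 2*N < N \<Longrightarrow> z mod N = z - 2*(N::int)"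
  using my_modq[of z 2 N] by simp

lemma pow2_mod3: "(2::int)^m mod 3 = 1 \<or> (2::int)^m mod 3 = 2"
proof (induction m)
  case 0 then show ?case by simp
next
  case (Suc m)
  have "(2::int)^Suc m mod 3 = (2 * ((2::int)^m mod 3)) mod 3" by (simp add: mod_mult_right_eq)
  with Suc show ?case by auto
qed

lemma pow2_ge2: "n \<ge> 1 \<Longrightarrow> (2::int)^n \<ge> 2"
proof (cases n)
  case (Suc m)
  have "(1::int) \<le> 2^m" by simp
  then show ?thesis using Suc by simp
qed simp

lemma upper_arith:
  fixes x y :: int
  assumes N: "N = 2^n" and x: "0 \<le> x" "x < N" and y: "0 \<le> y" "y < N"
  shows "\<exists>c\<ge>0. c + (x+c) mod N + (y+c) mod N \<le> N - 1"
proof -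
  have n3: "\<not> 3 * y = 2 * N" "\<not> 3 * x = 2 * N"
  proof -
    have h: "(2*N) mod 3 \<noteq> 0" using pow2_mod3[of "Suc n"] N by auto
    show "\<not> 3 * y = 2 * N"
    proof
      assume "3 * y = 2 * N"
      then have "(2*N) mod 3 = (3*y) mod 3" by simp
      then show False using h by simp
    qed
    show "\<not> 3 * x = 2 * N"
    proof
      assume "3 * x = 2 * N"
      then have "(2*N) mod 3 = (3*x) mod 3" by simp
      then show False using h by simp
    qed
  qed
  consider "x + y \<le> N - 1" | "x \<le> y" "y + 1 \<le> 2*x" | "x < y" "N + x + 1 \<le> 2*y"
    | "y \<le> x" "x + 1 \<le> 2*y" | "y < x" "N + y + 1 \<le> 2*x"
    using n3 x y by linarith
  then show ?thesis
  proof cases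
    case 1 then show ?thesis using x y by (intro exI[of _ 0]) (simp add: my_mod0)
  next
    case 2 then show ?thesis using x y
      by (intro exI[of _ "N - x"]) (simp add: my_mod0 my_mod1)
  next
    case 3 then show ?thesis using x y
      by (intro exI[of _ "N - y"]) (simp add: my_mod0 my_mod1)
  next
    case 4 then show ?thesis using x y
      by (intro exI[of _ "N - y"]) (simp add: my_mod0 my_mod1)
  next
    case 5 then show ?thesis using x y
      by (intro exI[of _ "N - x"]) (simp add: my_mod0 my_mod1)
  qed
qed

lemma lower_arith:
  fixes c :: int
  assumes N: "N = 2^n" and n: "n \<ge> 1" and x: "x = N div 3" and c: "c \<ge> 0"
  shows "c + (x+c) mod N + (2*x+1+c) mod N \<ge> N - 1"
proof -
  have "N mod 3 = 1 \<or> N mod 3 = 2" using pow2_mod3 N by auto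
  then have Nx: "N = 3*x+1 \<or> N = 3*x+2" using x div_mult_mod_eq[of N 3] by linarith
  have N2: "N \<ge> 2" using N n
    using pow2_ge2[OF n] by simp
  have m1: "(x+c) mod N \<ge> 0" "(2*x+1+c) mod N \<ge> 0" using N2 by auto
  consider "c \<le> N - 2*x - 2" | "N - 2*x - 1 \<le> c" "c \<le> N - x - 1" | "N - x \<le> c" "c < N" | "c \<ge> N"
    by linarith
  then show ?thesis
  proof cases
    case 1
    have "(x+c) mod N = x+c" by (rule my_mod0) (use 1 Nx c N2 in linarith)+
    moreover have "(2*x+1+c) mod N = 2*x+1+c" by (rule my_mod0) (use 1 Nx c N2 in linarith)+
    ultimately show ?thesis using 1 Nx c N2 by linarith
  next
    case 2
    have "(x+c) mod N = x+c" by (rule my_mod0) (use 2 Nx c N2 in linarith)+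
    moreover have "(2*x+1+c) mod N = 2*x+1+c-N" by (rule my_mod1) (use 2 Nx c N2 in linarith)+
    ultimately show ?thesis using 2 Nx c N2 by linarith
  next
    case 3
    have "(x+c) mod N = x+c-N" by (rule my_mod1) (use 3 Nx c N2 in linarith)+
    moreover have "(2*x+1+c) mod N = 2*x+1+c-N" by (rule my_mod1) (use 3 Nx c N2 in linarith)+
    ultimately show ?thesis using 3 Nx c N2 by linarith
  next
    case 4 then show ?thesis using m1 by linarith
  qed
qed


lemma mod_shift: "((u::int) + (d + c) mod N - c) mod N = (u + d) mod N"
proof -
  have "(u + (d + c) mod N - c) mod N = ((u - c) + (d + c) mod N) mod N" by (simp add: algebra_simps)
  also have "\<dots> = ((u - c) + (d + c)) mod N" by (simp add: mod_add_right_eq)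
  finally show ?thesis by (simp add: algebra_simps)
qed

lemma div3_bound: "(N::int) \<ge> 2 \<Longrightarrow> N mod 3 \<noteq> 0 \<Longrightarrow> 0 \<le> N div 3 \<and> 2*(N div 3)+1 < N"
proof -
  assume a: "N \<ge> 2" and m: "N mod 3 \<noteq> 0"
  define q where "q = N div 3"
  define r where "r = N mod 3"
  have e: "q * 3 + r = N" unfolding q_def r_def by simp
  have r: "0 \<le> r" "r < 3" unfolding r_def by simp_all
  have r1: "r \<ge> 1" using r m zless_imp_add1_zle[of 0 r] unfolding r_def by linarith
  have q0: "q \<ge> 0"
  proof (rule ccontr)
    assume "\<not> q \<ge> 0"
    then have "q + 1 \<le> 0" using zless_imp_add1_zle[of q 0] by linarith
    then show False using e r a by linarith
  qed
  have "q = 0 \<or> q \<ge> 1" using q0 zless_imp_add1_zle[of 0 q] by linarith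
  then show ?thesis using e r r1 a q0 unfolding q_def[symmetric] by linarith
qed

lemma reach_le:
  assumes u: "u \<in> at_vertices n" and v: "v \<in> at_vertices n"
  shows "\<exists>k. (u,v) \<in> at_arcs n ^^ k \<and> int k \<le> 2^n - 1"
proof -
  define N :: int where "N = 2^n"
  define x where "x = (fst v - fst u) mod N"
  define y where "y = (snd v - snd u) mod N"
  have Np: "N > 0" by (simp add: N_def)
  have "0 \<le> x" "x < N" "0 \<le> y" "y < N" using Np by (auto simp: x_def y_def)
  then obtain c where c: "c \<ge> 0" "c + (x+c) mod N + (y+c) mod N \<le> N - 1"
    using upper_arith[OF N_def] by blast
  define a where "a = nat ((x+c) mod N)"
  define b where "b = nat ((y+c) mod N)"
  have ia: "int a = (x+c) mod N" using Np by (simp add: a_def)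
  have ib: "int b = (y+c) mod N" using Np by (simp add: b_def)
  have ic: "int (nat c) = c" using c by simp
  have fv: "fst v mod N = fst v" "snd v mod N = snd v" using v by (auto simp: at_vertices_def N_def)
  have e1: "fst v = (fst u + int a - int (nat c)) mod N"
    unfolding ia ic mod_shift x_def by (simp add: mod_add_right_eq fv)
  have e2: "snd v = (snd u + int b - int (nat c)) mod N"
    unfolding ib ic mod_shift y_def by (simp add: mod_add_right_eq fv)
  have "(u,v) \<in> at_arcs n ^^ (a + b + nat c)"
    using e1 e2 unfolding reach[OF u] N_def by blast
  moreover have "int (a + b + nat c) \<le> 2^n - 1" using c ia ib ic by (simp add: N_def)
  ultimately show ?thesis by blast
qed

lemma dist_le:
  assumes u: "u \<in> at_vertices n" and v: "v \<in> at_vertices n"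
  shows "int (at_dist n u v) \<le> 2^n - 1"
proof -
  obtain k where k: "(u,v) \<in> at_arcs n ^^ k" "int k \<le> 2^n - 1" using reach_le[OF u v] by blast
  have "at_dist n u v \<le> k" unfolding at_dist_def by (rule Least_le) (rule k(1))
  with k(2) show ?thesis by linarith
qed

lemma dist_ge:
  assumes n: "n \<ge> 1"
  defines "x \<equiv> (2::int)^n div 3"
  shows "int (at_dist n (0,0) (x, 2*x+1)) \<ge> 2^n - 1"
proof -
  define N :: int where "N = 2^n"
  have u: "(0,0) \<in> at_vertices n" by (simp add: at_vertices_def)
  have N2: "N \<ge> 2" using n unfolding N_def
    using pow2_ge2[OF n] by simp
  have v: "(x, 2*x+1) \<in> at_vertices n" unfolding at_vertices_def x_def
    using div3_bound[OF N2] pow2_mod3[of n] unfolding N_def by auto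
  have ex: "\<exists>k. ((0,0),(x,2*x+1)) \<in> at_arcs n ^^ k" using reach_le[OF u v] by blast
  have "((0,0),(x,2*x+1)) \<in> at_arcs n ^^ (at_dist n (0,0) (x, 2*x+1))"
    unfolding at_dist_def by (rule LeastI_ex) (rule ex)
  then obtain a b c :: nat where abc: "a + b + c = at_dist n (0,0) (x, 2*x+1)"
    "x = (int a - int c) mod N" "2*x+1 = (int b - int c) mod N"
    unfolding reach[OF u] N_def by auto
  have "(x + int c) mod N = int a mod N" unfolding abc(2) by (simp add: mod_add_left_eq)
  moreover have "int a mod N \<le> int a" by (rule zmod_le_nonneg_dividend) simp
  ultimately have ha: "(x + int c) mod N \<le> int a" by simp
  have "(2*x+1 + int c) mod N = int b mod N" unfolding abc(3) by (simp add: mod_add_left_eq)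
  moreover have "int b mod N \<le> int b" by (rule zmod_le_nonneg_dividend) simp
  ultimately have hb: "(2*x+1 + int c) mod N \<le> int b" by simp
  have "int c + (x + int c) mod N + (2*x+1+int c) mod N \<ge> N - 1"
    by (rule lower_arith[OF N_def n]) (auto simp: x_def N_def)
  moreover have "int (at_dist n (0,0) (x, 2*x+1)) = int a + int b + int c"
    unfolding abc(1)[symmetric] by simp
  ultimately show ?thesis using ha hb unfolding N_def by linarith
qed

lemma odiam: "int (at_odiam n) = 2^n - 1"
proof -
  define S where "S = {at_dist n u v | u v. u \<in> at_vertices n \<and> v \<in> at_vertices n}"
  have "S = (\<lambda>(u,v). at_dist n u v) ` (at_vertices n \<times> at_vertices n)"
    unfolding S_def by auto
  then have fin: "finite S" by (simp add: at_vertices_def)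
  have le: "\<forall>s\<in>S. int s \<le> 2^n - 1" unfolding S_def using dist_le by blast
  have mem: "\<exists>s\<in>S. int s = 2^n - 1"
  proof (cases "n = 0")
    case True
    have u: "(0,0) \<in> at_vertices n" by (simp add: at_vertices_def)
    have "at_dist n (0,0) (0,0) \<in> S" unfolding S_def using u by blast
    moreover have "int (at_dist n (0,0) (0,0)) \<le> 2^n - 1" using dist_le[OF u u] .
    ultimately show ?thesis using True by force
  next
    case False
    define x :: int where "x = 2^n div 3"
    have N2: "(2::int)^n \<ge> 2" using False pow2_ge2[of n] by simp
    have u: "(0,0) \<in> at_vertices n" by (simp add: at_vertices_def)
    have v: "(x, 2*x+1) \<in> at_vertices n" unfolding at_vertices_def x_def using div3_bound[OF N2] pow2_mod3[of n] by auto
    have "at_dist n (0,0) (x,2*x+1) \<in> S" unfolding S_def using u v by blast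
    moreover have "int (at_dist n (0,0) (x,2*x+1)) \<le> 2^n - 1" using dist_le[OF u v] .
    moreover have "int (at_dist n (0,0) (x,2*x+1)) \<ge> 2^n - 1" using dist_ge[of n] False
      unfolding x_def by simp
    ultimately have "at_dist n (0,0) (x,2*x+1) \<in> S"
      "int (at_dist n (0,0) (x,2*x+1)) = 2^n - 1" by linarith+
    then show ?thesis by blast
  qed
  then obtain m where m: "m \<in> S" "int m = 2^n - 1" by blast
  have "Max S = m"
  proof (rule Max_eqI[OF fin])
    fix y assume "y \<in> S"
    then have "int y \<le> 2^n - 1" using le by blast
    then show "y \<le> m" using m(2) by linarith
  qed (rule m(1))
  then show ?thesis unfolding at_odiam_def S_def[symmetric] using m by simp
qed

theorem lemma3:
  shows "at_odiam 0 = 0 \<and> (\<forall>n::nat. n > 0 \<longrightarrow> at_odiam n = 2 * at_odiam (n - 1) + 1)"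
proof
  show "at_odiam 0 = 0" using odiam[of 0] by simp
  show "\<forall>n::nat. n > 0 \<longrightarrow> at_odiam n = 2 * at_odiam (n - 1) + 1"
  proof (intro allI impI)
    fix n :: nat assume "n > 0"
    then obtain m where m: "n = Suc m" by (cases n) auto
    have "int (at_odiam n) = 2 * (2^m - 1) + 1" using odiam[of n] m by simp
    also have "\<dots> = int (2 * at_odiam (n - 1) + 1)" using odiam[of m] m by simp
    finally show "at_odiam n = 2 * at_odiam (n - 1) + 1" by linarith
  qed
qed

end
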